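(* The functor $\mathrm{Up}\circ\mathrm{Dn}:\mathbf{Poset}\to\mathbf{Poset}$ can be given a monad structure $(\mathrm{Up}\,\mathrm{Dn},\eta^1,\mu^1)$.
   Context: $\mathbf{Poset}$ is the category of partially ordered sets and monotone maps. $\mathrm{Up}$ sends a poset $(X,\le)$ to the set of its upward closed subsets ordered by reverse inclusion $\supseteq$, and a monotone $f:X\to Y$ to $P\mapsto\{y\in Y\mid \exists x\in P,\ f(x)\le y\}$. $\mathrm{Dn}$ sends a poset $(X,\le)$ to the set of its downward closed subsets ordered by inclusion $\subseteq$, and a monotone $f:X\to Y$ to $P\mapsto\{y\in Y\mid\exists x\in P,\ y\le f(x)\}$. A monad on a category is a triple $(T,\eta,\mu)$ with $T$ an endofunctor and natural transformations $\eta:\mathrm{id}\Rightarrow T$, $\mu:TT\Rightarrow T$ satisfying $\mu_X\circ\eta_{TX}=\mathrm{id}=\mu_X\circ T(\eta_X)$ and $\mu_X\circ T(\mu_X)=\mu_X\circ\mu_{TX}$. *)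

theory Defs
  imports Main
begin

text \<open>A poset is represented by its carrier set together with its order relation.
  Morphisms of Poset are monotone maps, compared extensionally on the carrier.\<close>

type_synonym 'a poset = "'a set \<times> ('a \<Rightarrow> 'a \<Rightarrow> bool)"

definition is_poset :: "'a poset \<Rightarrow> bool" where
  "is_poset X \<longleftrightarrow>
     (\<forall>x\<in>fst X. snd X x x) \<and>
     (\<forall>x\<in>fst X. \<forall>y\<in>fst X. snd X x y \<and> snd X y x \<longrightarrow> x = y) \<and>
     (\<forall>x\<in>fst X. \<forall>y\<in>fst X. \<forall>z\<in>fst X. snd X x y \<and> snd X y z \<longrightarrow> snd X x z)"

definition mono_map :: "'a poset \<Rightarrow> 'b poset \<Rightarrow> ('a \<Rightarrow> 'b) \<Rightarrow> bool" where
  "mono_map X Y f \<longleftrightarrow>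
     (\<forall>x\<in>fst X. f x \<in> fst Y) \<and>
     (\<forall>x\<in>fst X. \<forall>y\<in>fst X. snd X x y \<longrightarrow> snd Y (f x) (f y))"

definition Dn :: "'a poset \<Rightarrow> 'a set poset" where
  "Dn X = ({P. P \<subseteq> fst X \<and> (\<forall>x\<in>P. \<forall>y\<in>fst X. snd X y x \<longrightarrow> y \<in> P)},
           (\<lambda>P Q. P \<subseteq> Q))"

definition Up :: "'a poset \<Rightarrow> 'a set poset" where
  "Up X = ({P. P \<subseteq> fst X \<and> (\<forall>x\<in>P. \<forall>y\<in>fst X. snd X x y \<longrightarrow> y \<in> P)},
           (\<lambda>P Q. Q \<subseteq> P))"

text \<open>Action on morphisms; the first argument is the codomain poset Y of f.\<close>
definition Dn_map :: "'b poset \<Rightarrow> ('a \<Rightarrow> 'b) \<Rightarrow> 'a set \<Rightarrow> 'b set" where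
  "Dn_map Y f P = {y \<in> fst Y. \<exists>x\<in>P. snd Y y (f x)}"

definition Up_map :: "'b poset \<Rightarrow> ('a \<Rightarrow> 'b) \<Rightarrow> 'a set \<Rightarrow> 'b set" where
  "Up_map Y f P = {y \<in> fst Y. \<exists>x\<in>P. snd Y (f x) y}"

definition UD :: "'a poset \<Rightarrow> 'a set set poset" where
  "UD X = Up (Dn X)"

definition UD_map :: "'b poset \<Rightarrow> ('a \<Rightarrow> 'b) \<Rightarrow> 'a set set \<Rightarrow> 'b set set" where
  "UD_map Y f = Up_map (Dn Y) (Dn_map Y f)"

text \<open>The unit eta^1 (composite of the units of Dn and Up) and the multiplication mu^1.\<close>
definition eta1 :: "'a poset \<Rightarrow> 'a \<Rightarrow> 'a set set" where
  "eta1 X x = {D \<in> fst (Dn X). x \<in> D}"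

definition mu1 :: "'a poset \<Rightarrow> 'a set set set set \<Rightarrow> 'a set set" where
  "mu1 X AA = {D \<in> fst (Dn X). \<exists>DD\<in>AA. \<forall>U\<in>DD. D \<in> U}"

end

theory Submission
  imports Defs
begin

lemma Dn_mem: "P \<in> fst (Dn X) \<longleftrightarrow> P \<subseteq> fst X \<and> (\<forall>x\<in>P. \<forall>y\<in>fst X. snd X y x \<longrightarrow> y \<in> P)"
  by (simp add: Dn_def)
lemma Dn_ord[simp]: "snd (Dn X) = (\<lambda>P Q. P \<subseteq> Q)" by (simp add: Dn_def)
lemma UD_mem: "T \<in> fst (UD X) \<longleftrightarrow> T \<subseteq> fst (Dn X) \<and> (\<forall>P\<in>T. \<forall>Q\<in>fst (Dn X). P \<subseteq> Q \<longrightarrow> Q \<in> T)"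
  by (simp add: UD_def Up_def)
lemma UD_ord[simp]: "snd (UD X) = (\<lambda>P Q. Q \<subseteq> P)" by (simp add: UD_def Up_def)

lemma Dn_I: "P \<subseteq> fst X \<Longrightarrow> (\<And>x y. x \<in> P \<Longrightarrow> y \<in> fst X \<Longrightarrow> snd X y x \<Longrightarrow> y \<in> P) \<Longrightarrow> P \<in> fst (Dn X)"
  unfolding Dn_mem by blast
lemma Dn_D1: "P \<in> fst (Dn X) \<Longrightarrow> x \<in> P \<Longrightarrow> x \<in> fst X"
  by (simp add: Dn_mem subset_iff)
lemma Dn_down: "P \<in> fst (Dn X) \<Longrightarrow> x \<in> P \<Longrightarrow> y \<in> fst X \<Longrightarrow> snd X y x \<Longrightarrow> y \<in> P"
  by (simp add: Dn_mem)
lemma UD_I: "T \<subseteq> fst (Dn X) \<Longrightarrow> (\<And>P Q. P \<in> T \<Longrightarrow> Q \<in> fst (Dn X) \<Longrightarrow> P \<subseteq> Q \<Longrightarrow> Q \<in> T) \<Longrightarrow> T \<in> fst (UD X)"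
  unfolding UD_mem by blast
lemma UD_D1: "T \<in> fst (UD X) \<Longrightarrow> P \<in> T \<Longrightarrow> P \<in> fst (Dn X)"
  by (simp add: UD_mem subset_iff)
lemma UD_up: "T \<in> fst (UD X) \<Longrightarrow> P \<in> T \<Longrightarrow> Q \<in> fst (Dn X) \<Longrightarrow> P \<subseteq> Q \<Longrightarrow> Q \<in> T"
  by (simp add: UD_mem)
lemma DnUD_I: "P \<subseteq> fst (UD X) \<Longrightarrow> (\<And>U V. U \<in> P \<Longrightarrow> V \<in> fst (UD X) \<Longrightarrow> U \<subseteq> V \<Longrightarrow> V \<in> P) \<Longrightarrow> P \<in> fst (Dn (UD X))"
  by (rule Dn_I) auto

lemma mu1_I: "D \<in> fst (Dn X) \<Longrightarrow> DD \<in> AA \<Longrightarrow> \<forall>U\<in>DD. D \<in> U \<Longrightarrow> D \<in> mu1 X AA"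
  unfolding mu1_def by blast
lemma mu1_E: assumes "D \<in> mu1 X AA"
  obtains DD where "D \<in> fst (Dn X)" "DD \<in> AA" "\<forall>U\<in>DD. D \<in> U"
  using assms unfolding mu1_def by blast
lemma eta1_I: "D \<in> fst (Dn X) \<Longrightarrow> x \<in> D \<Longrightarrow> D \<in> eta1 X x"
  unfolding eta1_def by blast
lemma eta1_D: "D \<in> eta1 X x \<Longrightarrow> D \<in> fst (Dn X) \<and> x \<in> D"
  unfolding eta1_def by blast
lemma UD_map_I: "D \<in> fst (Dn Y) \<Longrightarrow> P \<in> T \<Longrightarrow> Dn_map Y f P \<subseteq> D \<Longrightarrow> D \<in> UD_map Y f T"
  unfolding UD_map_def Up_map_def by simp blast
lemma UD_map_E: assumes "D \<in> UD_map Y f T"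
  obtains P where "D \<in> fst (Dn Y)" "P \<in> T" "Dn_map Y f P \<subseteq> D"
  using assms unfolding UD_map_def Up_map_def by simp blast
lemma Dn_map_I: "y \<in> fst Y \<Longrightarrow> x \<in> P \<Longrightarrow> snd Y y (f x) \<Longrightarrow> y \<in> Dn_map Y f P"
  unfolding Dn_map_def by blast
lemma Dn_map_E: assumes "y \<in> Dn_map Y f P"
  obtains x where "y \<in> fst Y" "x \<in> P" "snd Y y (f x)"
  using assms unfolding Dn_map_def by blast

lemma Dn_map_D1: "y \<in> Dn_map Y f P \<Longrightarrow> y \<in> fst Y"
  unfolding Dn_map_def by blast
lemma UD_map_D1: "D \<in> UD_map Y f T \<Longrightarrow> D \<in> fst (Dn Y)"
  unfolding UD_map_def Up_map_def by simp
lemma mu1_D1: "D \<in> mu1 X AA \<Longrightarrow> D \<in> fst (Dn X)"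
  unfolding mu1_def by simp
lemma eta1_D1: "D \<in> eta1 X x \<Longrightarrow> D \<in> fst (Dn X)"
  unfolding eta1_def by simp
lemma eta1_D2: "D \<in> eta1 X x \<Longrightarrow> x \<in> D"
  unfolding eta1_def by simp

lemma eta_in: assumes "is_poset X" "x \<in> fst X" shows "eta1 X x \<in> fst (UD X)"
proof (rule UD_I)
  show "eta1 X x \<subseteq> fst (Dn X)" by (blast dest: eta1_D1)
  fix P Q assume "P \<in> eta1 X x" "Q \<in> fst (Dn X)" "P \<subseteq> Q"
  thus "Q \<in> eta1 X x" using eta1_D2[of P X x] eta1_I[of Q X x] by blast
qed

lemma UD_map_in: "UD_map Y f T \<in> fst (UD Y)"
proof (rule UD_I)
  show "UD_map Y f T \<subseteq> fst (Dn Y)" by (blast dest: UD_map_D1)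
  fix P Q assume P: "P \<in> UD_map Y f T" and Q: "Q \<in> fst (Dn Y)" and PQ: "P \<subseteq> Q"
  from P obtain P0 where "P0 \<in> T" "Dn_map Y f P0 \<subseteq> P" by (rule UD_map_E)
  thus "Q \<in> UD_map Y f T" using UD_map_I[OF Q] PQ by blast
qed

lemma mu_in: assumes AA: "AA \<in> fst (UD (UD X))" shows "mu1 X AA \<in> fst (UD X)"
proof (rule UD_I)
  show "mu1 X AA \<subseteq> fst (Dn X)" by (blast dest: mu1_D1)
  fix P Q assume P: "P \<in> mu1 X AA" and Q: "Q \<in> fst (Dn X)" and PQ: "P \<subseteq> Q"
  from P obtain DD where DD: "DD \<in> AA" and all: "\<forall>U\<in>DD. P \<in> U" by (rule mu1_E)
  have "\<forall>U\<in>DD. Q \<in> U"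
  proof
    fix U assume U: "U \<in> DD"
    have UU: "U \<in> fst (UD X)" using Dn_D1[OF UD_D1[OF AA DD] U] .
    have "P \<in> U" using U all by blast
    thus "Q \<in> U" using UD_up[OF UU _ Q PQ] by blast
  qed
  thus "Q \<in> mu1 X AA" using mu1_I[OF Q DD] by blast
qed

lemma eta_mono: assumes X: "is_poset X" shows "mono_map X (UD X) (eta1 X)"
  unfolding mono_map_def UD_ord
proof (intro conjI ballI impI)
  fix x assume "x \<in> fst X" thus "eta1 X x \<in> fst (UD X)" by (rule eta_in[OF X])
next
  fix x y assume x: "x \<in> fst X" and y: "y \<in> fst X" and xy: "snd X x y"
  show "eta1 X y \<subseteq> eta1 X x"
  proof
    fix D assume "D \<in> eta1 X y"
    hence D: "D \<in> fst (Dn X)" "y \<in> D" using eta1_D1[of D X y] eta1_D2[of D X y] by auto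
    hence "x \<in> D" using Dn_down[OF D x xy] by blast
    thus "D \<in> eta1 X x" using eta1_I[OF D(1)] by blast
  qed
qed

lemma mu_mono: "mono_map (UD (UD X)) (UD X) (mu1 X)"
  unfolding mono_map_def UD_ord
proof (intro conjI ballI impI)
  fix AA assume "AA \<in> fst (UD (UD X))" thus "mu1 X AA \<in> fst (UD X)" by (rule mu_in)
next
  fix AA BB :: "'a set set set set" assume "BB \<subseteq> AA" thus "mu1 X BB \<subseteq> mu1 X AA" unfolding mu1_def by blast
qed

lemma unit1: assumes "is_poset X" "T \<in> fst (UD X)" shows "mu1 X (eta1 (UD X) T) = T"
proof
  show "mu1 X (eta1 (UD X) T) \<subseteq> T"
  proof
    fix D assume "D \<in> mu1 X (eta1 (UD X) T)"
    then obtain DD where "DD \<in> eta1 (UD X) T" "\<forall>U\<in>DD. D \<in> U" by (rule mu1_E)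
    thus "D \<in> T" by (blast dest: eta1_D2)
  qed
  show "T \<subseteq> mu1 X (eta1 (UD X) T)"
  proof
    fix D assume D: "D \<in> T"
    let ?DD = "{U \<in> fst (UD X). T \<subseteq> U}"
    have "?DD \<in> fst (Dn (UD X))" by (rule DnUD_I) auto
    hence "?DD \<in> eta1 (UD X) T" using assms(2) by (intro eta1_I) auto
    moreover have "\<forall>U\<in>?DD. D \<in> U" using D by blast
    ultimately show "D \<in> mu1 X (eta1 (UD X) T)" by (rule mu1_I[OF UD_D1[OF assms(2) D]])
  qed
qed

lemma unit2: assumes X: "is_poset X" and T: "T \<in> fst (UD X)" shows "mu1 X (UD_map (UD X) (eta1 X) T) = T"
proof
  show "mu1 X (UD_map (UD X) (eta1 X) T) \<subseteq> T"
  proof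
    fix D assume "D \<in> mu1 X (UD_map (UD X) (eta1 X) T)"
    then obtain DD where D: "D \<in> fst (Dn X)" and DD: "DD \<in> UD_map (UD X) (eta1 X) T"
      and all: "\<forall>U\<in>DD. D \<in> U" by (rule mu1_E)
    from DD obtain P where P: "P \<in> T" and sub: "Dn_map (UD X) (eta1 X) P \<subseteq> DD" by (rule UD_map_E)
    have PX: "P \<in> fst (Dn X)" using UD_D1[OF T P] .
    have "P \<subseteq> D"
    proof
      fix x assume x: "x \<in> P"
      have xX: "x \<in> fst X" using Dn_D1[OF PX x] .
      have "eta1 X x \<in> Dn_map (UD X) (eta1 X) P"
        by (rule Dn_map_I[OF eta_in[OF X xX] x]) simp
      hence "D \<in> eta1 X x" using sub all by blast
      thus "x \<in> D" by (rule eta1_D2)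
    qed
    thus "D \<in> T" using UD_up[OF T P D] by blast
  qed
  show "T \<subseteq> mu1 X (UD_map (UD X) (eta1 X) T)"
  proof
    fix D assume DT: "D \<in> T"
    have DX: "D \<in> fst (Dn X)" using UD_D1[OF T DT] .
    let ?DD = "Dn_map (UD X) (eta1 X) D"
    have "?DD \<in> fst (Dn (UD X))"
    proof (rule DnUD_I)
      show "?DD \<subseteq> fst (UD X)" by (blast dest: Dn_map_D1)
      fix U V assume U: "U \<in> ?DD" and V: "V \<in> fst (UD X)" and UV: "U \<subseteq> V"
      from U obtain x where "x \<in> D" "eta1 X x \<subseteq> U" by (rule Dn_map_E) simp
      thus "V \<in> ?DD" using UV Dn_map_I[OF V, of x D "eta1 X"] by auto
    qed
    hence "?DD \<in> UD_map (UD X) (eta1 X) T" using UD_map_I[OF _ DT] by blast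
    moreover have "\<forall>U\<in>?DD. D \<in> U"
    proof
      fix U assume "U \<in> ?DD"
      then obtain x where "x \<in> D" "eta1 X x \<subseteq> U" by (rule Dn_map_E) simp
      thus "D \<in> U" using eta1_I[OF DX] by blast
    qed
    ultimately show "D \<in> mu1 X (UD_map (UD X) (eta1 X) T)" by (rule mu1_I[OF DX])
  qed
qed

lemma assoc: assumes X: "is_poset X" and T: "T \<in> fst (UD (UD (UD X)))"
  shows "mu1 X (UD_map (UD X) (mu1 X) T) = mu1 X (mu1 (UD X) T)"
proof
  show "mu1 X (UD_map (UD X) (mu1 X) T) \<subseteq> mu1 X (mu1 (UD X) T)"
  proof
    fix D assume "D \<in> mu1 X (UD_map (UD X) (mu1 X) T)"
    then obtain DD where D: "D \<in> fst (Dn X)" and DD: "DD \<in> UD_map (UD X) (mu1 X) T"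
      and all: "\<forall>U\<in>DD. D \<in> U" by (rule mu1_E)
    from DD obtain Q where Q: "Q \<in> T" and sub: "Dn_map (UD X) (mu1 X) Q \<subseteq> DD" by (rule UD_map_E)
    have QD: "Q \<in> fst (Dn (UD (UD X)))" using UD_D1[OF T Q] .
    let ?E = "{U \<in> fst (UD X). D \<in> U}"
    have E: "?E \<in> fst (Dn (UD X))" by (rule DnUD_I) auto
    have "\<forall>V\<in>Q. ?E \<in> V"
    proof
      fix V assume V: "V \<in> Q"
      have VU: "V \<in> fst (UD (UD X))" using Dn_D1[OF QD V] .
      have "mu1 X V \<in> Dn_map (UD X) (mu1 X) Q" by (rule Dn_map_I[OF mu_in[OF VU] V]) simp
      hence "D \<in> mu1 X V" using sub all by blast
      then obtain DD' where DD': "DD' \<in> V" "\<forall>U\<in>DD'. D \<in> U" by (rule mu1_E)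
      have DDD: "DD' \<in> fst (Dn (UD X))" using UD_D1[OF VU DD'(1)] .
      have "DD' \<subseteq> ?E" using DD'(2) Dn_D1[OF DDD] by blast
      thus "?E \<in> V" using UD_up[OF VU DD'(1) E] by blast
    qed
    hence "?E \<in> mu1 (UD X) T" by (rule mu1_I[OF E Q])
    moreover have "\<forall>U\<in>?E. D \<in> U" by blast
    ultimately show "D \<in> mu1 X (mu1 (UD X) T)" by (rule mu1_I[OF D])
  qed
  show "mu1 X (mu1 (UD X) T) \<subseteq> mu1 X (UD_map (UD X) (mu1 X) T)"
  proof
    fix D assume "D \<in> mu1 X (mu1 (UD X) T)"
    then obtain E where D: "D \<in> fst (Dn X)" and E: "E \<in> mu1 (UD X) T" and all: "\<forall>U\<in>E. D \<in> U"
      by (rule mu1_E)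
    from E obtain Q where Q: "Q \<in> T" and EV: "\<forall>V\<in>Q. E \<in> V" by (rule mu1_E)
    have QD: "Q \<in> fst (Dn (UD (UD X)))" using UD_D1[OF T Q] .
    let ?DD = "Dn_map (UD X) (mu1 X) Q"
    have "?DD \<in> fst (Dn (UD X))"
    proof (rule DnUD_I)
      show "?DD \<subseteq> fst (UD X)" by (blast dest: Dn_map_D1)
      fix U V assume U: "U \<in> ?DD" and V: "V \<in> fst (UD X)" and UV: "U \<subseteq> V"
      from U obtain W where "W \<in> Q" "mu1 X W \<subseteq> U" by (rule Dn_map_E) simp
      thus "V \<in> ?DD" using UV Dn_map_I[OF V, of W Q "mu1 X"] by auto
    qed
    hence "?DD \<in> UD_map (UD X) (mu1 X) T" using UD_map_I[OF _ Q] by blast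
    moreover have "\<forall>U\<in>?DD. D \<in> U"
    proof
      fix U assume "U \<in> ?DD"
      then obtain V where V: "V \<in> Q" "mu1 X V \<subseteq> U" by (rule Dn_map_E) simp
      have "E \<in> V" using EV V(1) by blast
      hence "D \<in> mu1 X V" using mu1_I[OF D _ all] by blast
      thus "D \<in> U" using V(2) by blast
    qed
    ultimately show "D \<in> mu1 X (UD_map (UD X) (mu1 X) T)" by (rule mu1_I[OF D])
  qed
qed

lemma nat_eta: assumes X: "is_poset X" and Y: "is_poset Y" and f: "mono_map X Y f" and x: "x \<in> fst X"
  shows "UD_map Y f (eta1 X x) = eta1 Y (f x)"
proof
  have fx: "f x \<in> fst Y" using f x unfolding mono_map_def by blast
  have reflY: "\<And>y. y \<in> fst Y \<Longrightarrow> snd Y y y" using Y unfolding is_poset_def by blast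
  show "UD_map Y f (eta1 X x) \<subseteq> eta1 Y (f x)"
  proof
    fix D' assume "D' \<in> UD_map Y f (eta1 X x)"
    then obtain D where D': "D' \<in> fst (Dn Y)" and D: "D \<in> eta1 X x" and sub: "Dn_map Y f D \<subseteq> D'"
      by (rule UD_map_E)
    have "x \<in> D" using eta1_D2[OF D] .
    hence "f x \<in> Dn_map Y f D" by (rule Dn_map_I[where f=f and P=D, OF fx _ reflY[OF fx]])
    thus "D' \<in> eta1 Y (f x)" using sub eta1_I[OF D'] by blast
  qed
  show "eta1 Y (f x) \<subseteq> UD_map Y f (eta1 X x)"
  proof
    fix D' assume "D' \<in> eta1 Y (f x)"
    hence D': "D' \<in> fst (Dn Y)" "f x \<in> D'" by (rule eta1_D1, rule eta1_D2)
    let ?D = "{z \<in> fst X. snd X z x}"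
    have transX: "\<And>a b c. a \<in> fst X \<Longrightarrow> b \<in> fst X \<Longrightarrow> c \<in> fst X \<Longrightarrow> snd X a b \<Longrightarrow> snd X b c \<Longrightarrow> snd X a c"
      using X unfolding is_poset_def by blast
    have transY: "\<And>a b c. a \<in> fst Y \<Longrightarrow> b \<in> fst Y \<Longrightarrow> c \<in> fst Y \<Longrightarrow> snd Y a b \<Longrightarrow> snd Y b c \<Longrightarrow> snd Y a c"
      using Y unfolding is_poset_def by blast
    have Dd: "?D \<in> fst (Dn X)"
    proof (rule Dn_I)
      show "?D \<subseteq> fst X" by blast
      fix a b assume "a \<in> ?D" "b \<in> fst X" "snd X b a"
      thus "b \<in> ?D" using transX[of b a x] x by blast
    qed
    have "x \<in> ?D" using X x unfolding is_poset_def by blast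
    hence "?D \<in> eta1 X x" by (rule eta1_I[OF Dd])
    moreover have "Dn_map Y f ?D \<subseteq> D'"
    proof
      fix y assume "y \<in> Dn_map Y f ?D"
      then obtain z where y: "y \<in> fst Y" "z \<in> ?D" "snd Y y (f z)" by (rule Dn_map_E)
      have zX: "z \<in> fst X" "snd X z x" using y(2) by auto
      have "snd Y (f z) (f x)" using f zX x unfolding mono_map_def by blast
      moreover have "f z \<in> fst Y" using f zX unfolding mono_map_def by blast
      ultimately have "snd Y y (f x)" using transY[OF y(1) _ fx y(3)] by blast
      thus "y \<in> D'" using Dn_down[OF D'(1) D'(2) y(1)] by blast
    qed
    ultimately show "D' \<in> UD_map Y f (eta1 X x)" by (rule UD_map_I[OF D'(1)])
  qed
qed

lemma nat_mu: assumes X: "is_poset X" and Y: "is_poset Y" and f: "mono_map X Y f" and T: "T \<in> fst (UD (UD X))"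
  shows "UD_map Y f (mu1 X T) = mu1 Y (UD_map (UD Y) (UD_map Y f) T)"
proof
  show "UD_map Y f (mu1 X T) \<subseteq> mu1 Y (UD_map (UD Y) (UD_map Y f) T)"
  proof
    fix D' assume "D' \<in> UD_map Y f (mu1 X T)"
    then obtain D where D': "D' \<in> fst (Dn Y)" and Dm: "D \<in> mu1 X T" and sub: "Dn_map Y f D \<subseteq> D'"
      by (rule UD_map_E)
    from Dm obtain DD where DD: "DD \<in> T" and all: "\<forall>U\<in>DD. D \<in> U" by (rule mu1_E)
    let ?EE = "Dn_map (UD Y) (UD_map Y f) DD"
    have "?EE \<in> fst (Dn (UD Y))"
    proof (rule DnUD_I)
      show "?EE \<subseteq> fst (UD Y)" by (blast dest: Dn_map_D1)
      fix U V assume U: "U \<in> ?EE" and V: "V \<in> fst (UD Y)" and UV: "U \<subseteq> V"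
      from U obtain W where "W \<in> DD" "UD_map Y f W \<subseteq> U" by (rule Dn_map_E) simp
      thus "V \<in> ?EE" using UV Dn_map_I[OF V, of W DD "UD_map Y f"] by auto
    qed
    hence "?EE \<in> UD_map (UD Y) (UD_map Y f) T" using UD_map_I[OF _ DD] by blast
    moreover have "\<forall>V\<in>?EE. D' \<in> V"
    proof
      fix V assume "V \<in> ?EE"
      then obtain U where U: "U \<in> DD" "UD_map Y f U \<subseteq> V" by (rule Dn_map_E) simp
      have "D \<in> U" using U(1) all by blast
      hence "D' \<in> UD_map Y f U" by (rule UD_map_I[OF D' _ sub])
      thus "D' \<in> V" using U(2) by blast
    qed
    ultimately show "D' \<in> mu1 Y (UD_map (UD Y) (UD_map Y f) T)" by (rule mu1_I[OF D'])
  qed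
  show "mu1 Y (UD_map (UD Y) (UD_map Y f) T) \<subseteq> UD_map Y f (mu1 X T)"
  proof
    fix D' assume "D' \<in> mu1 Y (UD_map (UD Y) (UD_map Y f) T)"
    then obtain EE where D': "D' \<in> fst (Dn Y)" and EE: "EE \<in> UD_map (UD Y) (UD_map Y f) T"
      and all: "\<forall>V\<in>EE. D' \<in> V" by (rule mu1_E)
    from EE obtain DD where DD: "DD \<in> T" and sub: "Dn_map (UD Y) (UD_map Y f) DD \<subseteq> EE"
      by (rule UD_map_E)
    have DDD: "DD \<in> fst (Dn (UD X))" using UD_D1[OF T DD] .
    have reflY: "\<And>y. y \<in> fst Y \<Longrightarrow> snd Y y y" using Y unfolding is_poset_def by blast
    have fY: "\<And>z. z \<in> fst X \<Longrightarrow> f z \<in> fst Y" using f unfolding mono_map_def by blast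
    have fmono: "\<And>a b. a \<in> fst X \<Longrightarrow> b \<in> fst X \<Longrightarrow> snd X a b \<Longrightarrow> snd Y (f a) (f b)"
      using f unfolding mono_map_def by blast
    let ?D = "{z \<in> fst X. f z \<in> D'}"
    have Dd: "?D \<in> fst (Dn X)"
    proof (rule Dn_I)
      show "?D \<subseteq> fst X" by blast
      fix a b assume a: "a \<in> ?D" and b: "b \<in> fst X" and ba: "snd X b a"
      have "snd Y (f b) (f a)" using fmono[OF b _ ba] a by blast
      hence "f b \<in> D'" using Dn_down[OF D' _ fY[OF b]] a by blast
      thus "b \<in> ?D" using b by blast
    qed
    have "\<forall>U\<in>DD. ?D \<in> U"
    proof
      fix U assume U: "U \<in> DD"
      have UU: "U \<in> fst (UD X)" using Dn_D1[OF DDD U] .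
      have "UD_map Y f U \<in> Dn_map (UD Y) (UD_map Y f) DD"
        by (rule Dn_map_I[OF UD_map_in U]) simp
      hence "D' \<in> UD_map Y f U" using sub all by blast
      then obtain DU where DU: "DU \<in> U" "Dn_map Y f DU \<subseteq> D'" by (rule UD_map_E)
      have DUX: "DU \<in> fst (Dn X)" using UD_D1[OF UU DU(1)] .
      have "DU \<subseteq> ?D"
      proof
        fix z assume z: "z \<in> DU"
        have zX: "z \<in> fst X" using Dn_D1[OF DUX z] .
        have "f z \<in> Dn_map Y f DU" by (rule Dn_map_I[where f=f and P=DU, OF fY[OF zX] z reflY[OF fY[OF zX]]])
        thus "z \<in> ?D" using DU(2) zX by blast
      qed
      thus "?D \<in> U" using UD_up[OF UU DU(1) Dd] by blast
    qed
    hence "?D \<in> mu1 X T" by (rule mu1_I[OF Dd DD])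
    moreover have "Dn_map Y f ?D \<subseteq> D'"
    proof
      fix y assume "y \<in> Dn_map Y f ?D"
      then obtain z where y: "y \<in> fst Y" "z \<in> ?D" "snd Y y (f z)" by (rule Dn_map_E)
      thus "y \<in> D'" using Dn_down[OF D' _ y(1) y(3)] by blast
    qed
    ultimately show "D' \<in> UD_map Y f (mu1 X T)" by (rule UD_map_I[OF D'])
  qed
qed

theorem mainTheorem4:
  shows "(\<forall>X :: 'a poset. is_poset X \<longrightarrow>
            mono_map X (UD X) (eta1 X) \<and>
            mono_map (UD (UD X)) (UD X) (mu1 X) \<and>
            (\<forall>T\<in>fst (UD X). mu1 X (eta1 (UD X) T) = T) \<and>
            (\<forall>T\<in>fst (UD X). mu1 X (UD_map (UD X) (eta1 X) T) = T) \<and>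
            (\<forall>T\<in>fst (UD (UD (UD X))).
                mu1 X (UD_map (UD X) (mu1 X) T) = mu1 X (mu1 (UD X) T)))
       \<and> (\<forall>(X :: 'a poset) (Y :: 'b poset) f.
            is_poset X \<longrightarrow> is_poset Y \<longrightarrow> mono_map X Y f \<longrightarrow>
            (\<forall>x\<in>fst X. UD_map Y f (eta1 X x) = eta1 Y (f x)) \<and>
            (\<forall>T\<in>fst (UD (UD X)).
                UD_map Y f (mu1 X T) = mu1 Y (UD_map (UD Y) (UD_map Y f) T)))"
proof (intro conjI allI impI ballI)
  fix X :: "'a poset" assume X: "is_poset X"
  show "mono_map X (UD X) (eta1 X)" by (rule eta_mono[OF X])
  show "mono_map (UD (UD X)) (UD X) (mu1 X)" by (rule mu_mono)
  show "\<And>T. T \<in> fst (UD X) \<Longrightarrow> mu1 X (eta1 (UD X) T) = T" by (rule unit1[OF X])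
  show "\<And>T. T \<in> fst (UD X) \<Longrightarrow> mu1 X (UD_map (UD X) (eta1 X) T) = T" by (rule unit2[OF X])
  show "\<And>T. T \<in> fst (UD (UD (UD X))) \<Longrightarrow> mu1 X (UD_map (UD X) (mu1 X) T) = mu1 X (mu1 (UD X) T)"
    by (rule assoc[OF X])
next
  fix X :: "'a poset" and Y :: "'b poset" and f :: "'a \<Rightarrow> 'b"
  assume X: "is_poset X" and Y: "is_poset Y" and f: "mono_map X Y f"
  show "\<And>x. x \<in> fst X \<Longrightarrow> UD_map Y f (eta1 X x) = eta1 Y (f x)" by (rule nat_eta[OF X Y f])
  show "\<And>T. T \<in> fst (UD (UD X)) \<Longrightarrow> UD_map Y f (mu1 X T) = mu1 Y (UD_map (UD Y) (UD_map Y f) T)"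
    by (rule nat_mu[OF X Y f])
qed

end
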